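(* Let $G$ be a finite group, $N$ a normal subgroup of $G$, and $A$, $B$ conjugacy classes of $G$. Suppose there exist $a\in A$ and $b\in B$ such that $AB\subseteq ab\,\mathbf{Z}(N)$. Then $\mathbf{C}_N(A)\cap\mathbf{C}_N(B)\supseteq [N,N]$. In particular $\operatorname{dl}(N/\mathbf{C}_N(A))\le 1$.
   Context: $AB=\{xy\mid x\in A,y\in B\}$; $ab\,\mathbf{Z}(N)=\{abz\mid z\in\mathbf{Z}(N)\}$ where $\mathbf{Z}(N)$ is the center of $N$. For a subset $X\subseteq G$, $\mathbf{C}_N(X)=\{n\in N\mid n^{-1}xn=x\text{ for all }x\in X\}$. $[N,N]$ is the derived subgroup of $N$ and $\operatorname{dl}$ denotes derived length. *)

theory Defs
  imports "HOL-Algebra.Algebra"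
begin

definition conj_class :: "('a, 'b) monoid_scheme \<Rightarrow> 'a \<Rightarrow> 'a set" where
  "conj_class G x = {inv\<^bsub>G\<^esub> g \<otimes>\<^bsub>G\<^esub> x \<otimes>\<^bsub>G\<^esub> g | g. g \<in> carrier G}"

definition subgroup_center :: "('a, 'b) monoid_scheme \<Rightarrow> 'a set \<Rightarrow> 'a set" where
  "subgroup_center G N = {z \<in> N. \<forall>n \<in> N. z \<otimes>\<^bsub>G\<^esub> n = n \<otimes>\<^bsub>G\<^esub> z}"

definition centralizer_in :: "('a, 'b) monoid_scheme \<Rightarrow> 'a set \<Rightarrow> 'a set \<Rightarrow> 'a set" where
  "centralizer_in G N S = {u \<in> N. \<forall>x \<in> S. (inv\<^bsub>G\<^esub> u) \<otimes>\<^bsub>G\<^esub> x \<otimes>\<^bsub>G\<^esub> u = x}"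

end

theory Submission
  imports Defs
begin

lemma (in group) center_sub: "subgroup N G \<Longrightarrow> subgroup_center G N \<subseteq> N"
  unfolding subgroup_center_def by auto

lemma (in group) center_comm: "z \<in> subgroup_center G N \<Longrightarrow> n \<in> N \<Longrightarrow> z \<otimes> n = n \<otimes> z"
  unfolding subgroup_center_def by auto

lemma (in group) comm_centralizes:
  assumes N: "subgroup N G" and x: "x \<in> carrier G"
    and Z: "\<And>n. n \<in> N \<Longrightarrow> inv x \<otimes> (inv n \<otimes> x \<otimes> n) \<in> subgroup_center G N"
    and h1: "h1 \<in> N" and h2: "h2 \<in> N"
  shows "inv (h1 \<otimes> h2 \<otimes> inv h1 \<otimes> inv h2) \<otimes> x \<otimes> (h1 \<otimes> h2 \<otimes> inv h1 \<otimes> inv h2) = x"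
proof -
  interpret N: subgroup N G by fact
  define f where "f n = inv x \<otimes> (inv n \<otimes> x \<otimes> n)" for n
  have fN: "f n \<in> N" if "n \<in> N" for n using Z[OF that] center_sub[OF N] f_def by auto
  have fC: "f n \<in> carrier G" if "n \<in> N" for n using fN[OF that] by auto
  have fc: "f n \<otimes> m = m \<otimes> f n" if "n \<in> N" "m \<in> N" for n m
    using Z[OF that(1)] that(2) center_comm f_def by auto
  have fmul: "f (n \<otimes> m) = f m \<otimes> f n" if n: "n \<in> N" and m: "m \<in> N" for n m
  proof -
    have nc: "n \<in> carrier G" "m \<in> carrier G" using n m by auto
    have "f m \<otimes> f n = inv x \<otimes> inv m \<otimes> x \<otimes> (m \<otimes> f n)"
      using nc x fC[OF n] by (simp add: f_def m_assoc)
    also have "\<dots> = inv x \<otimes> inv m \<otimes> x \<otimes> (f n \<otimes> m)" using fc[OF n m] by simp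
    also have "\<dots> = f (n \<otimes> m)"
      using nc x by (simp add: f_def m_assoc inv_mult_group r_inv_ex flip: m_assoc[of x "inv x"])
    finally show ?thesis by simp
  qed
  have f1: "f \<one> = \<one>" using x by (simp add: f_def)
  have finv: "f (inv n) = inv (f n)" if n: "n \<in> N" for n
  proof -
    have "f (n \<otimes> inv n) = f (inv n) \<otimes> f n" using fmul[OF n N.m_inv_closed[OF n]] n by simp
    then have "f (inv n) \<otimes> f n = \<one>" using n f1 by auto
    then show ?thesis using fC n by (metis N.m_inv_closed inv_equality)
  qed
  let ?c = "h1 \<otimes> h2 \<otimes> inv h1 \<otimes> inv h2"
  have "f ?c = inv (f h2) \<otimes> inv (f h1) \<otimes> f h2 \<otimes> f h1"
    using h1 h2 fmul finv fN by (simp add: m_assoc)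
  also have "\<dots> = inv (f h2) \<otimes> inv (f h1) \<otimes> (f h1 \<otimes> f h2)"
    using fc[OF h2 fN[OF h1]] fC h1 h2 by (simp add: m_assoc)
  also have "\<dots> = \<one>" using fC[OF h1] fC[OF h2]
    by (metis inv_mult_group m_assoc m_closed inv_closed l_inv)
  finally have "f ?c = \<one>" .
  moreover have "?c \<in> carrier G" using h1 h2 by auto
  ultimately show ?thesis using x unfolding f_def
    by (metis inv_closed m_closed inv_equality inv_inv l_inv r_inv)
qed



lemma (in group) quot_comm:
  assumes K: "subgroup K G" and D: "derived G (carrier G) \<subseteq> K"
  shows "K \<lhd> G \<and> comm_group (G Mod K)"
proof -
  have dm: "g1 \<otimes> g2 \<otimes> inv g1 \<otimes> inv g2 \<in> K" if "g1 \<in> carrier G" "g2 \<in> carrier G" for g1 g2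
  proof -
    have "g1 \<otimes> g2 \<otimes> inv g1 \<otimes> inv g2 \<in> derived_set G (carrier G)" using that by blast
    then have "g1 \<otimes> g2 \<otimes> inv g1 \<otimes> inv g2 \<in> derived G (carrier G)"
      unfolding derived_def by (rule generate.incl)
    then show ?thesis using D by blast
  qed
  have nK: "K \<lhd> G"
  proof (rule normal_invI[OF K])
    fix x h assume x: "x \<in> carrier G" and h: "h \<in> K"
    have hc: "h \<in> carrier G" using h K subgroup.subset by blast
    have "x \<otimes> h \<otimes> inv x = (x \<otimes> h \<otimes> inv x \<otimes> inv h) \<otimes> h"
      using x hc by (simp add: m_assoc)
    then show "x \<otimes> h \<otimes> inv x \<in> K" using subgroup.m_closed[OF K dm[OF x hc] h] by simp
  qed
  interpret KN: normal K G by fact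
  have "comm_group (G Mod K)"
  proof (rule group.group_comm_groupI[OF KN.factorgroup_is_group], simp add: FactGroup_def)
    fix P Q assume "P \<in> rcosets K" and "Q \<in> rcosets K"
    then obtain g1 g2
      where g1: "g1 \<in> carrier G" "P = K #> g1"
        and g2: "g2 \<in> carrier G" "Q = K #> g2"
      unfolding RCOSETS_def by auto
    have eq: "K #> (g1 \<otimes> g2) = K #> (g2 \<otimes> g1)" if g1: "g1 \<in> carrier G" and g2: "g2 \<in> carrier G" for g1 g2
    proof -
      have "g1 \<otimes> g2 = (g1 \<otimes> g2 \<otimes> inv g1 \<otimes> inv g2) \<otimes> (g2 \<otimes> g1)"
        using g1 g2 by (simp add: m_assoc flip: m_assoc[of "inv g2" g2])
      then have "g1 \<otimes> g2 \<in> K #> (g2 \<otimes> g1)"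
        using dm[OF g1 g2] unfolding r_coset_def by blast
      then show ?thesis using repr_independence[OF _ m_closed[OF g2 g1] K] by simp
    qed
    have "P <#> Q = K #> (g1 \<otimes> g2)" using g1 g2 by (simp add: KN.rcos_sum)
    also have "\<dots> = K #> (g2 \<otimes> g1)" using eq[OF g1(1) g2(1)] .
    also have "\<dots> = Q <#> P" using g1 g2 by (simp add: KN.rcos_sum)
    finally show "P <#> Q = Q <#> P" .
  qed
  then show ?thesis using nK by simp
qed



lemma (in group) centralizer_subgroup:
  assumes N: "subgroup N G" and S: "S \<subseteq> carrier G"
  shows "subgroup (centralizer_in G N S) G"
proof -
  interpret N: subgroup N G by fact
  show ?thesis
  proof
    show "centralizer_in G N S \<subseteq> carrier G" unfolding centralizer_in_def by auto
    show "\<one> \<in> centralizer_in G N S" unfolding centralizer_in_def using S by auto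
  next
    fix u v assume u: "u \<in> centralizer_in G N S" and v: "v \<in> centralizer_in G N S"
    then have uc: "u \<in> N" "u \<in> carrier G" and vc: "v \<in> N" "v \<in> carrier G" unfolding centralizer_in_def by auto
    show "u \<otimes> v \<in> centralizer_in G N S" unfolding centralizer_in_def
    proof (intro CollectI conjI ballI)
      show "u \<otimes> v \<in> N" using uc vc by auto
      fix x assume x: "x \<in> S"
      have xc: "x \<in> carrier G" using x S by auto
      have "inv (u \<otimes> v) \<otimes> x \<otimes> (u \<otimes> v) = inv v \<otimes> (inv u \<otimes> x \<otimes> u) \<otimes> v"
        using uc vc xc by (simp add: m_assoc inv_mult_group)
      also have "\<dots> = x" using u v x unfolding centralizer_in_def by auto
      finally show "inv (u \<otimes> v) \<otimes> x \<otimes> (u \<otimes> v) = x" .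
    qed
    show "inv u \<in> centralizer_in G N S" unfolding centralizer_in_def
    proof (intro CollectI conjI ballI)
      show "inv u \<in> N" using uc by auto
      fix x assume x: "x \<in> S"
      have xc: "x \<in> carrier G" using x S by auto
      have e: "inv u \<otimes> x \<otimes> u = x" using u x unfolding centralizer_in_def by auto
      have "inv (inv u) \<otimes> x \<otimes> inv u = u \<otimes> (inv u \<otimes> x \<otimes> u) \<otimes> inv u"
        using e uc by simp
      also have "\<dots> = x" using uc xc by (simp add: m_assoc flip: m_assoc[of u "inv u"])
      finally show "inv (inv u) \<otimes> x \<otimes> inv u = x" .
    qed
  qed
qed



lemma (in group) conj_class_closed:
  assumes x0: "x0 \<in> carrier G" and x: "x \<in> conj_class G x0" and g: "g \<in> carrier G"
  shows "inv g \<otimes> x \<otimes> g \<in> conj_class G x0" "x \<in> carrier G"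
proof -
  obtain h where h: "h \<in> carrier G" "x = inv h \<otimes> x0 \<otimes> h" using x unfolding conj_class_def by auto
  have "inv g \<otimes> x \<otimes> g = inv (h \<otimes> g) \<otimes> x0 \<otimes> (h \<otimes> g)"
    using h g x0 by (simp add: m_assoc inv_mult_group)
  then show "inv g \<otimes> x \<otimes> g \<in> conj_class G x0" unfolding conj_class_def using h g by blast
  show "x \<in> carrier G" using h x0 by simp
qed

lemma (in group) center_props:
  assumes N: "N \<lhd> G"
  shows "\<And>z w. z \<in> subgroup_center G N \<Longrightarrow> w \<in> subgroup_center G N \<Longrightarrow> inv z \<otimes> w \<in> subgroup_center G N"
    and "\<And>z g. z \<in> subgroup_center G N \<Longrightarrow> g \<in> carrier G \<Longrightarrow> g \<otimes> z \<otimes> inv g \<in> subgroup_center G N"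
    and "\<And>z. z \<in> subgroup_center G N \<Longrightarrow> z \<in> carrier G"
proof -
  interpret N: normal N G by fact
  fix z assume "z \<in> subgroup_center G N" then show "z \<in> carrier G" unfolding subgroup_center_def by auto
next
  interpret N: normal N G by fact
  fix z w assume z: "z \<in> subgroup_center G N" and w: "w \<in> subgroup_center G N"
  then have zc: "z \<in> N" "z \<in> carrier G" and wc: "w \<in> N" "w \<in> carrier G" unfolding subgroup_center_def by auto
  show "inv z \<otimes> w \<in> subgroup_center G N" unfolding subgroup_center_def
  proof (intro CollectI conjI ballI)
    show "inv z \<otimes> w \<in> N" using zc wc by auto
    fix n assume n: "n \<in> N"
    have nc: "n \<in> carrier G" using n by auto
    have zn: "z \<otimes> n = n \<otimes> z" and wn: "w \<otimes> n = n \<otimes> w" using z w n unfolding subgroup_center_def by auto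
    have "inv z \<otimes> n = inv z \<otimes> (n \<otimes> z) \<otimes> inv z" using zc nc by (simp add: m_assoc)
    also have "\<dots> = inv z \<otimes> (z \<otimes> n) \<otimes> inv z" using zn by simp
    also have "\<dots> = n \<otimes> inv z" using zc nc by (simp add: m_assoc flip: m_assoc[of "inv z" z])
    finally have zn': "inv z \<otimes> n = n \<otimes> inv z" .
    have "inv z \<otimes> w \<otimes> n = inv z \<otimes> (w \<otimes> n)" using zc wc nc by (simp add: m_assoc)
    also have "\<dots> = (inv z \<otimes> n) \<otimes> w" using wn zc wc nc by (simp add: m_assoc)
    also have "\<dots> = n \<otimes> (inv z \<otimes> w)" using zn' zc wc nc by (simp add: m_assoc)
    finally show "inv z \<otimes> w \<otimes> n = n \<otimes> (inv z \<otimes> w)" .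
  qed
next
  interpret N: normal N G by fact
  fix z g assume z: "z \<in> subgroup_center G N" and g: "g \<in> carrier G"
  then have zc: "z \<in> N" "z \<in> carrier G" unfolding subgroup_center_def by auto
  show "g \<otimes> z \<otimes> inv g \<in> subgroup_center G N" unfolding subgroup_center_def
  proof (intro CollectI conjI ballI)
    show "g \<otimes> z \<otimes> inv g \<in> N" using N.inv_op_closed2 g zc by auto
    fix n assume n: "n \<in> N"
    have nc: "n \<in> carrier G" using n by auto
    have m: "inv g \<otimes> n \<otimes> g \<in> N" using N.inv_op_closed1 g n by auto
    have zm: "z \<otimes> (inv g \<otimes> n \<otimes> g) = (inv g \<otimes> n \<otimes> g) \<otimes> z" using z m unfolding subgroup_center_def by auto
    have "g \<otimes> z \<otimes> inv g \<otimes> n = g \<otimes> (z \<otimes> (inv g \<otimes> n \<otimes> g)) \<otimes> inv g"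
      using g nc zc by (simp add: m_assoc)
    also have "\<dots> = g \<otimes> ((inv g \<otimes> n \<otimes> g) \<otimes> z) \<otimes> inv g" using zm by simp
    also have "\<dots> = n \<otimes> (g \<otimes> z \<otimes> inv g)"
      using g nc zc by (simp add: m_assoc flip: m_assoc[of g "inv g"])
    finally show "g \<otimes> z \<otimes> inv g \<otimes> n = n \<otimes> (g \<otimes> z \<otimes> inv g)" .
  qed
qed




theorem lemma3p2:
  fixes G (structure) and N A B :: "'a set" and a b :: 'a
  assumes "group G" and "finite (carrier G)"
    and "N \<lhd> G"
    and "\<exists>x \<in> carrier G. A = conj_class G x"
    and "\<exists>y \<in> carrier G. B = conj_class G y"
    and "a \<in> A" and "b \<in> B"
    and "A <#> B \<subseteq> (a \<otimes> b) <# subgroup_center G N"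
  shows "derived G N \<subseteq> centralizer_in G N A \<inter> centralizer_in G N B
         \<and> comm_group ((G\<lparr>carrier := N\<rparr>) Mod (centralizer_in G N A))"
proof -
  interpret group G by fact
  interpret N: normal N G by fact
  have Nsub: "subgroup N G" by (rule N.subgroup_axioms)
  note ZP = center_props[OF assms(3)]
  obtain x0 where x0: "x0 \<in> carrier G" "A = conj_class G x0" using assms(4) by blast
  obtain y0 where y0: "y0 \<in> carrier G" "B = conj_class G y0" using assms(5) by blast
  have Ac: "A \<subseteq> carrier G" using conj_class_closed(2)[OF x0(1)] x0(2) by blast
  have Bc: "B \<subseteq> carrier G" using conj_class_closed(2)[OF y0(1)] y0(2) by blast
  have ac: "a \<in> carrier G" using Ac assms(6) by blast
  have bc: "b \<in> carrier G" using Bc assms(7) by blast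
  have cos: "\<exists>z\<in>subgroup_center G N. p \<otimes> q = a \<otimes> b \<otimes> z" if "p \<in> A" "q \<in> B" for p q
  proof -
    have "p \<otimes> q \<in> A <#> B" using that unfolding set_mult_def by blast
    then have "p \<otimes> q \<in> (a \<otimes> b) <# subgroup_center G N" using assms(8) by blast
    then show ?thesis unfolding l_coset_def by blast
  qed
  have KA: "inv x \<otimes> (inv n \<otimes> x \<otimes> n) \<in> subgroup_center G N" if x: "x \<in> A" and n: "n \<in> N" for x n
  proof -
    have xc: "x \<in> carrier G" using x Ac by blast
    have nc: "n \<in> carrier G" using n N.subset by blast
    have xn: "inv n \<otimes> x \<otimes> n \<in> A" using conj_class_closed(1)[OF x0(1) _ nc] x x0(2) by blast
    have xnc: "inv n \<otimes> x \<otimes> n \<in> carrier G" using xc nc by simp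
    obtain z1 where z1: "z1 \<in> subgroup_center G N" "(inv n \<otimes> x \<otimes> n) \<otimes> b = a \<otimes> b \<otimes> z1"
      using cos[OF xn assms(7)] by blast
    obtain z2 where z2: "z2 \<in> subgroup_center G N" "x \<otimes> b = a \<otimes> b \<otimes> z2"
      using cos[OF x assms(7)] by blast
    have z1c: "z1 \<in> carrier G" and z2c: "z2 \<in> carrier G" using ZP(3) z1 z2 by auto
    define w where "w = inv z2 \<otimes> z1"
    have wZ: "w \<in> subgroup_center G N" using ZP(1) z1 z2 w_def by blast
    have wc: "w \<in> carrier G" using z1c z2c w_def by simp
    have e1: "a \<otimes> b = x \<otimes> b \<otimes> inv z2"
      using z2(2) ac bc z2c xc by (simp add: m_assoc)
    have e2: "(inv n \<otimes> x \<otimes> n) \<otimes> b = x \<otimes> b \<otimes> w"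
      using z1(2) e1 ac bc z1c z2c xc by (simp add: m_assoc w_def)
    have "inv x \<otimes> (inv n \<otimes> x \<otimes> n) = inv x \<otimes> ((inv n \<otimes> x \<otimes> n) \<otimes> b) \<otimes> inv b"
      using xc xnc bc by (simp add: m_assoc)
    also have "\<dots> = inv x \<otimes> (x \<otimes> b \<otimes> w) \<otimes> inv b" using e2 by simp
    also have "\<dots> = b \<otimes> w \<otimes> inv b" using xc bc wc
      by (simp add: m_assoc flip: m_assoc[of "inv x" x])
    finally show ?thesis using ZP(2)[OF wZ bc] by simp
  qed
  have KB: "inv y \<otimes> (inv n \<otimes> y \<otimes> n) \<in> subgroup_center G N" if y: "y \<in> B" and n: "n \<in> N" for y n
  proof -
    have yc: "y \<in> carrier G" using y Bc by blast
    have nc: "n \<in> carrier G" using n N.subset by blast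
    have yn: "inv n \<otimes> y \<otimes> n \<in> B" using conj_class_closed(1)[OF y0(1) _ nc] y y0(2) by blast
    have ync: "inv n \<otimes> y \<otimes> n \<in> carrier G" using yc nc by simp
    obtain z1 where z1: "z1 \<in> subgroup_center G N" "a \<otimes> (inv n \<otimes> y \<otimes> n) = a \<otimes> b \<otimes> z1"
      using cos[OF assms(6) yn] by blast
    obtain z2 where z2: "z2 \<in> subgroup_center G N" "a \<otimes> y = a \<otimes> b \<otimes> z2"
      using cos[OF assms(6) y] by blast
    have z1c: "z1 \<in> carrier G" and z2c: "z2 \<in> carrier G" using ZP(3) z1 z2 by auto
    have "a \<otimes> (inv n \<otimes> y \<otimes> n) = a \<otimes> (b \<otimes> z1)"
      using z1(2) m_assoc[OF ac bc z1c] by simp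
    then have e1: "inv n \<otimes> y \<otimes> n = b \<otimes> z1"
      by (rule l_cancel[OF _ ync m_closed[OF bc z1c] ac])
    have "a \<otimes> y = a \<otimes> (b \<otimes> z2)"
      using z2(2) m_assoc[OF ac bc z2c] by simp
    then have e2: "y = b \<otimes> z2"
      by (rule l_cancel[OF _ yc m_closed[OF bc z2c] ac])
    have "inv y \<otimes> (inv n \<otimes> y \<otimes> n) = inv z2 \<otimes> z1"
      unfolding e1 using e2 bc z1c z2c
      by (simp add: inv_mult_group m_assoc flip: m_assoc[of "inv b" b])
    then show ?thesis using ZP(1)[OF z2(1) z1(1)] by simp
  qed
  have D: "derived G N \<subseteq> centralizer_in G N S"
    if Sc: "S \<subseteq> carrier G" and K: "\<And>x n. x \<in> S \<Longrightarrow> n \<in> N \<Longrightarrow> inv x \<otimes> (inv n \<otimes> x \<otimes> n) \<in> subgroup_center G N"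
    for S
    unfolding derived_def
  proof (rule generate_subgroup_incl[OF _ centralizer_subgroup[OF Nsub Sc]])
    show "derived_set G N \<subseteq> centralizer_in G N S"
    proof
      fix c assume "c \<in> derived_set G N"
      then obtain h1 h2 where h: "h1 \<in> N" "h2 \<in> N" "c = h1 \<otimes> h2 \<otimes> inv h1 \<otimes> inv h2" by blast
      show "c \<in> centralizer_in G N S" unfolding centralizer_in_def
      proof (intro CollectI conjI ballI)
        show "c \<in> N" using h by simp
        fix x assume x: "x \<in> S"
        show "inv c \<otimes> x \<otimes> c = x" unfolding h(3)
          using comm_centralizes[OF Nsub _ K h(1,2)] x Sc by blast
      qed
    qed
  qed
  have DA: "derived G N \<subseteq> centralizer_in G N A" using D[OF Ac KA] by blast
  have DB: "derived G N \<subseteq> centralizer_in G N B" using D[OF Bc KB] by blast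
  have grpH: "group (G\<lparr>carrier := N\<rparr>)" by (rule subgroup_imp_group[OF Nsub])
  have KsubN: "centralizer_in G N A \<subseteq> N" unfolding centralizer_in_def by blast
  have Ksub: "subgroup (centralizer_in G N A) (G\<lparr>carrier := N\<rparr>)"
    by (rule subgroup_incl[OF centralizer_subgroup[OF Nsub Ac] Nsub KsubN])
  have "derived (G\<lparr>carrier := N\<rparr>) (carrier (G\<lparr>carrier := N\<rparr>)) = derived G N"
    using derived_consistent[OF subset_refl Nsub] by simp
  then have "comm_group ((G\<lparr>carrier := N\<rparr>) Mod (centralizer_in G N A))"
    using group.quot_comm[OF grpH Ksub] DA by simp
  then show ?thesis using DA DB by blast
qed


end
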